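(* Let $g\in\omega^\omega$ with $g(k)>0$ for all $k$ and $g$ tending to infinity. Then $\mathfrak c_{\omega,g}=\mathfrak c_{\omega,\mathcal C}$.
   Context: A slalom is a sequence $S=\langle S_k\mid k<\omega\rangle$ of finite subsets of $\omega$; $x\in\omega^\omega$ is captured by $S$, written $x\in^*S$, if $x(k)\in S_k$ for all but finitely many $k$. $\mathfrak c_{\omega,g}:=\min\{|\mathcal S|:\mathcal S\subseteq\prod_{k<\omega}[\omega]^{\le g(k)},\ \forall x\in\omega^\omega\ \exists S\in\mathcal S: x\in^*S\}$. $\mathcal C$ is the set of all slaloms $S$ with $\sum_{k\ge1}|S_k|/k^2<\infty$, and $\mathfrak c_{\omega,\mathcal C}:=\min\{|\mathcal S|:\mathcal S\subseteq\mathcal C,\ \forall x\in\omega^\omega\ \exists S\in\mathcal S: x\in^*S\}$. *)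

theory Defs
  imports Complex_Main
begin

type_synonym slalom = "nat \<Rightarrow> nat set"

definition is_slalom :: "slalom \<Rightarrow> bool" where
  "is_slalom S \<longleftrightarrow> (\<forall>k. finite (S k))"

definition captured :: "(nat \<Rightarrow> nat) \<Rightarrow> slalom \<Rightarrow> bool" where
  "captured x S \<longleftrightarrow> (\<forall>\<^sub>F k in sequentially. x k \<in> S k)"

definition g_slaloms :: "(nat \<Rightarrow> nat) \<Rightarrow> slalom set" where
  "g_slaloms g = {S. is_slalom S \<and> (\<forall>k. card (S k) \<le> g k)}"

definition C_slaloms :: "slalom set" where
  "C_slaloms = {S. is_slalom S \<and> summable (\<lambda>k. real (card (S (Suc k))) / (real (Suc k))^2)}"

definition covering :: "slalom set \<Rightarrow> bool" where
  "covering \<S> \<longleftrightarrow> (\<forall>x. \<exists>S\<in>\<S>. captured x S)"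

text \<open>Equality of the two minimal cardinalities c_{omega,g} = c_{omega,C}, expressed as:
  every covering family from one class can be matched by a covering family from the
  other class of no larger cardinality (and vice versa).\<close>
definition same_covering_number :: "slalom set \<Rightarrow> slalom set \<Rightarrow> bool" where
  "same_covering_number A B \<longleftrightarrow>
     (\<forall>F. F \<subseteq> A \<and> covering F \<longrightarrow> (\<exists>G. G \<subseteq> B \<and> covering G \<and> (card_of G, card_of F) \<in> ordLeq)) \<and>
     (\<forall>G. G \<subseteq> B \<and> covering G \<longrightarrow> (\<exists>F. F \<subseteq> A \<and> covering F \<and> (card_of F, card_of G) \<in> ordLeq))"

end

theory Submission
  imports Defs "HOL-Analysis.Analysis" "HOL-Library.Nat_Bijection"
begin

lemma reindex_exists:
  fixes s t :: "nat \<Rightarrow> nat"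
  assumes t: "filterlim t at_top sequentially"
  shows "\<exists>\<nu> L. filterlim \<nu> at_top sequentially \<and> (\<forall>\<^sub>F k in sequentially. s (\<nu> k) \<le> t k)
           \<and> (\<forall>k. k < L (\<nu> k))"
proof -
  define P where "P n k \<longleftrightarrow> (\<forall>j\<ge>k. \<forall>m\<le>n. s m \<le> t j)" for n k
  have exP: "\<exists>k. P n k" for n
  proof -
    have "\<forall>\<^sub>F j in sequentially. Max (s ` {..n}) \<le> t j"
      using t unfolding filterlim_at_top by blast
    then obtain k where k: "\<forall>j\<ge>k. Max (s ` {..n}) \<le> t j"
      by (auto simp: eventually_sequentially)
    have "\<forall>m\<le>n. s m \<le> Max (s ` {..n})" by auto
    with k show ?thesis unfolding P_def by (meson order_trans)
  qed
  define M where "M n = (LEAST k. P n k)" for n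
  have PM: "P n (M n)" for n unfolding M_def using exP by (meson LeastI_ex)
  have Mmono: "M n \<le> M n'" if "n \<le> n'" for n n'
  proof -
    have "P n (M n')" using PM[of n'] that unfolding P_def by auto
    then show ?thesis unfolding M_def by (rule Least_le)
  qed
  define \<nu> where "\<nu> k = Max (insert 0 {n. n \<le> k \<and> M n \<le> k})" for k
  have fin: "finite (insert 0 {n. n \<le> k \<and> M n \<le> k})" for k by auto
  have nu_le: "\<nu> k \<le> k" for k
    unfolding \<nu>_def using fin[of k] by (subst Max_le_iff) auto
  have nu_ge: "N \<le> \<nu> k" if "N \<le> k" "M N \<le> k" for N k
    unfolding \<nu>_def using fin[of k] that by (intro Max_ge) auto
  have nu_in: "M (\<nu> k) \<le> k" if "M 0 \<le> k" for k
  proof -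
    have "\<nu> k \<in> insert 0 {n. n \<le> k \<and> M n \<le> k}"
      unfolding \<nu>_def using fin[of k] by (intro Max_in) auto
    then show ?thesis using that by auto
  qed
  define L where "L n = M (Suc n) + Suc n" for n
  have "filterlim \<nu> at_top sequentially"
    unfolding filterlim_at_top eventually_sequentially
    by (meson max.bounded_iff nu_ge order.refl)
  moreover have "\<forall>\<^sub>F k in sequentially. s (\<nu> k) \<le> t k"
    unfolding eventually_sequentially
  proof (intro exI allI impI)
    fix k assume "M 0 \<le> k"
    then have "M (\<nu> k) \<le> k" by (rule nu_in)
    then have "P (\<nu> k) k" using PM[of "\<nu> k"] unfolding P_def by auto
    then show "s (\<nu> k) \<le> t k" unfolding P_def by auto
  qed
  moreover have "\<forall>k. k < L (\<nu> k)"
  proof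
    fix k show "k < L (\<nu> k)"
    proof (rule ccontr)
      assume "\<not> k < L (\<nu> k)"
      then have "Suc (\<nu> k) \<le> k" "M (Suc (\<nu> k)) \<le> k" unfolding L_def by auto
      then have "Suc (\<nu> k) \<le> \<nu> k" by (rule nu_ge)
      then show False by simp
    qed
  qed
  ultimately show ?thesis by blast
qed

definition transf :: "(nat \<Rightarrow> nat) \<Rightarrow> (nat \<Rightarrow> nat) \<Rightarrow> slalom \<Rightarrow> slalom" where
  "transf \<nu> t S = (\<lambda>k. if card ((\<lambda>c. list_decode c ! k) ` S (\<nu> k)) \<le> t k
      then (\<lambda>c. list_decode c ! k) ` S (\<nu> k) else {})"

lemma transf_slalom:
  assumes "is_slalom S"
  shows "is_slalom (transf \<nu> t S)" "card (transf \<nu> t S k) \<le> t k"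
  using assms unfolding is_slalom_def transf_def by auto

lemma transf_covering:
  assumes cov: "covering F"
    and FS: "\<forall>S\<in>F. is_slalom S \<and> (\<forall>\<^sub>F n in sequentially. card (S n) \<le> s n)"
    and nu: "filterlim \<nu> at_top sequentially"
    and st: "\<forall>\<^sub>F k in sequentially. s (\<nu> k) \<le> t k"
    and L: "\<forall>k. k < L (\<nu> k)"
  shows "covering (transf \<nu> t ` F)"
  unfolding covering_def
proof
  fix x :: "nat \<Rightarrow> nat"
  define y where "y n = list_encode (map x [0..<L n])" for n
  obtain S where S: "S \<in> F" "captured y S" using cov unfolding covering_def by blast
  have fS: "finite (S n)" for n using FS S(1) unfolding is_slalom_def by auto
  have e1: "\<forall>\<^sub>F k in sequentially. y (\<nu> k) \<in> S (\<nu> k)"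
    using S(2) nu unfolding captured_def by (rule eventually_compose_filterlim)
  have e2: "\<forall>\<^sub>F k in sequentially. card (S (\<nu> k)) \<le> s (\<nu> k)"
    using FS S(1) nu by (auto intro: eventually_compose_filterlim)
  have "\<forall>\<^sub>F k in sequentially. x k \<in> transf \<nu> t S k"
    using e1 e2 st
  proof eventually_elim
    case (elim k)
    let ?A = "(\<lambda>c. list_decode c ! k) ` S (\<nu> k)"
    have "card ?A \<le> t k" using card_image_le[OF fS, of "\<lambda>c. list_decode c ! k" "\<nu> k"] elim by linarith
    moreover have "x k \<in> ?A"
    proof
      show "y (\<nu> k) \<in> S (\<nu> k)" using elim by auto
      show "x k = list_decode (y (\<nu> k)) ! k" unfolding y_def using L[rule_format, of k]
        by (simp add: list_encode_inverse)
    qed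
    ultimately show ?case unfolding transf_def by simp
  qed
  then show "\<exists>T\<in>transf \<nu> t ` F. captured x T" using S(1) unfolding captured_def by blast
qed

definition hsq :: "nat \<Rightarrow> nat" where "hsq k = nat \<lfloor>sqrt (real k)\<rfloor>"

lemma hsq_tendsto: "filterlim hsq at_top sequentially"
  unfolding filterlim_at_top eventually_sequentially
proof (intro allI exI impI)
  fix Z n :: nat assume "Z^2 \<le> n"
  then have "real Z ^ 2 \<le> real n" by (metis of_nat_le_iff of_nat_power)
  then have "real Z \<le> sqrt (real n)" using real_le_rsqrt by blast
  then have "int Z \<le> \<lfloor>sqrt (real n)\<rfloor>" by (simp add: le_floor_iff)
  then show "Z \<le> hsq n" unfolding hsq_def by linarith
qed

lemma hsq_C:
  assumes "is_slalom S" "\<forall>k. card (S k) \<le> hsq k"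
  shows "S \<in> C_slaloms"
proof -
  have sm: "summable (\<lambda>k. real (Suc k) powr (-3/2))"
    using summable_Suc_iff[of "\<lambda>n. real n powr (-3/2)"] summable_real_powr_iff[of "-3/2"] by simp
  have le: "norm (real (card (S (Suc k))) / (real (Suc k))^2) \<le> real (Suc k) powr (-3/2)" for k
  proof -
    let ?n = "real (Suc k)"
    have "real (card (S (Suc k))) \<le> real (hsq (Suc k))" using assms(2) by simp
    also have "\<dots> \<le> sqrt ?n" unfolding hsq_def by simp
    also have "\<dots> = ?n powr (1/2)" by (simp add: powr_half_sqrt)
    finally have c: "real (card (S (Suc k))) \<le> ?n powr (1/2)" .
    have "real (card (S (Suc k))) / ?n^2 \<le> ?n powr (1/2) / ?n^2"
      using c by (simp add: divide_right_mono)
    also have "\<dots> = ?n powr (1/2) / ?n powr 2"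
    proof -
      have "?n powr 2 = ?n ^ 2" by (rule powr_numeral) simp
      then show ?thesis by simp
    qed
    also have "\<dots> = ?n powr (1/2 - 2)" by (rule powr_diff[symmetric])
    also have "(1/2 - 2 :: real) = -3/2" by simp
    finally show ?thesis by simp
  qed
  have "summable (\<lambda>k. real (card (S (Suc k))) / (real (Suc k))^2)"
    by (rule summable_comparison_test[OF _ sm]) (use le in blast)
  then show ?thesis using assms(1) unfolding C_slaloms_def by simp
qed

lemma C_bound:
  assumes "S \<in> C_slaloms"
  shows "is_slalom S \<and> (\<forall>\<^sub>F n in sequentially. card (S n) \<le> n^2)"
proof -
  have sm: "summable (\<lambda>k. real (card (S (Suc k))) / (real (Suc k))^2)" and sl: "is_slalom S"
    using assms unfolding C_slaloms_def by auto
  have "(\<lambda>k. real (card (S (Suc k))) / (real (Suc k))^2) \<longlonglongrightarrow> 0"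
    using sm by (rule summable_LIMSEQ_zero)
  then have "\<forall>\<^sub>F k in sequentially. real (card (S (Suc k))) / (real (Suc k))^2 < 1"
    by (rule order_tendstoD) simp
  then have "\<forall>\<^sub>F k in sequentially. card (S (Suc k)) \<le> (Suc k)^2"
  proof eventually_elim
    case (elim k)
    then have "real (card (S (Suc k))) < (real (Suc k))^2"
      by (simp add: divide_less_eq)
    then show ?case by (metis less_imp_le of_nat_le_iff of_nat_power)
  qed
  then have "\<forall>\<^sub>F n in sequentially. card (S n) \<le> n^2"
    by (subst eventually_sequentially_Suc[symmetric])
  with sl show ?thesis by simp
qed

theorem lemma10p6:
  fixes g :: "nat \<Rightarrow> nat"
  assumes "\<forall>k. g k > 0"
    and "filterlim g at_top sequentially"
  shows "same_covering_number (g_slaloms g) C_slaloms"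
  unfolding same_covering_number_def
proof (intro conjI allI impI)
  fix F assume F: "F \<subseteq> g_slaloms g \<and> covering F"
  obtain \<nu> L where nu: "filterlim \<nu> at_top sequentially"
    "\<forall>\<^sub>F k in sequentially. g (\<nu> k) \<le> hsq k" "\<forall>k. k < L (\<nu> k)"
    using reindex_exists[OF hsq_tendsto, of g] by blast
  have FS: "\<forall>S\<in>F. is_slalom S \<and> (\<forall>\<^sub>F n in sequentially. card (S n) \<le> g n)"
    using F unfolding g_slaloms_def by auto
  have cov: "covering (transf \<nu> hsq ` F)"
    using transf_covering[OF _ FS nu] F by simp
  have sub: "transf \<nu> hsq ` F \<subseteq> C_slaloms"
  proof
    fix T assume "T \<in> transf \<nu> hsq ` F"
    then obtain S where "S \<in> F" "T = transf \<nu> hsq S" by blast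
    then show "T \<in> C_slaloms" using FS by (metis hsq_C transf_slalom)
  qed
  show "\<exists>G. G \<subseteq> C_slaloms \<and> covering G \<and> (card_of G, card_of F) \<in> ordLeq"
    using cov sub card_of_image[of "transf \<nu> hsq" F] by (intro exI[of _ "transf \<nu> hsq ` F"]) simp
next
  fix G assume G: "G \<subseteq> C_slaloms \<and> covering G"
  obtain \<nu> L where nu: "filterlim \<nu> at_top sequentially"
    "\<forall>\<^sub>F k in sequentially. (\<nu> k)^2 \<le> g k" "\<forall>k. k < L (\<nu> k)"
    using reindex_exists[OF assms(2), of "\<lambda>n. n^2"] by blast
  have FS: "\<forall>S\<in>G. is_slalom S \<and> (\<forall>\<^sub>F n in sequentially. card (S n) \<le> n^2)"
    using G C_bound by blast
  have cov: "covering (transf \<nu> g ` G)"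
    using transf_covering[OF _ FS nu] G by simp
  have sub: "transf \<nu> g ` G \<subseteq> g_slaloms g"
  proof
    fix T assume "T \<in> transf \<nu> g ` G"
    then obtain S where "S \<in> G" "T = transf \<nu> g S" by blast
    then show "T \<in> g_slaloms g" using FS transf_slalom unfolding g_slaloms_def by simp
  qed
  show "\<exists>F. F \<subseteq> g_slaloms g \<and> covering F \<and> (card_of F, card_of G) \<in> ordLeq"
    using cov sub card_of_image[of "transf \<nu> g" G] by (intro exI[of _ "transf \<nu> g ` G"]) simp
qed

end
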